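(* Let $c$ be constant. Then for all integers $a\ge b\ge0$, $$F(z^a\bar z^b)=(mc-a)b\,z^{a-1}\bar z^{b-1}-mc\sum_{1\le k\le(a-b)/m}(-1)^{mk}(a-b-mk)\,z^{a-mk-1}\bar z^{b+mk-1}.$$
   Context: Let $m\ge2$, $\zeta=e^{2\pi i/m}$, and let $z,\bar z$ be independent variables. For $j=0,\dots,m-1$ let $s_j$ be the algebra automorphism of $\mathbb C[z,\bar z]$ with $s_j(z)=-\zeta^j\bar z$, $s_j(\bar z)=-\zeta^{-j}z$. For a constant $c\in\mathbb C$ define Dunkl operators $Y(q)=\frac{\partial q}{\partial z}-c\sum_{j=0}^{m-1}\frac{q-s_j(q)}{z+\zeta^j\bar z}$ and $\bar Y(q)=\frac{\partial q}{\partial\bar z}-c\sum_{j=0}^{m-1}\frac{q-s_j(q)}{\bar z+\zeta^{-j}z}$ (they commute), and $F=-Y\bar Y$. (A term with a negative exponent has coefficient zero.) *)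

theory Defs
  imports Complex_Main "HOL-Computational_Algebra.Polynomial"
begin

text \<open>Bivariate polynomials C[z, zb] are modelled as nested polynomials
  complex poly poly: the outer variable is zb, coefficients are polynomials in z.\<close>

type_synonym bipoly = "complex poly poly"

definition Zv :: bipoly where "Zv = [:[:0, 1:]:]"
definition Zbv :: bipoly where "Zbv = [:0, 1:]"
definition cst :: "complex \<Rightarrow> bipoly" where "cst x = [:[:x:]:]"

definition eval2 :: "bipoly \<Rightarrow> bipoly \<Rightarrow> bipoly \<Rightarrow> bipoly" where
  "eval2 q X Y = poly (map_poly (\<lambda>p. poly (map_poly cst p) X) q) Y"

definition dz :: "bipoly \<Rightarrow> bipoly" where "dz q = map_poly pderiv q"
definition dzb :: "bipoly \<Rightarrow> bipoly" where "dzb q = pderiv q"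

definition zeta :: "nat \<Rightarrow> complex" where "zeta m = cis (2 * pi / real m)"

definition refl_s :: "nat \<Rightarrow> nat \<Rightarrow> bipoly \<Rightarrow> bipoly" where
  "refl_s m j q = eval2 q (cst (- (zeta m ^ j)) * Zbv) (cst (- (inverse (zeta m) ^ j)) * Zv)"

definition dunklY :: "nat \<Rightarrow> complex \<Rightarrow> bipoly \<Rightarrow> bipoly" where
  "dunklY m c q = dz q - cst c * (\<Sum>j<m. (q - refl_s m j q) div (Zv + cst (zeta m ^ j) * Zbv))"

definition dunklYb :: "nat \<Rightarrow> complex \<Rightarrow> bipoly \<Rightarrow> bipoly" where
  "dunklYb m c q = dzb q - cst c * (\<Sum>j<m. (q - refl_s m j q) div (Zbv + cst (inverse (zeta m) ^ j) * Zv))"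

definition dunklF :: "nat \<Rightarrow> complex \<Rightarrow> bipoly \<Rightarrow> bipoly" where
  "dunklF m c q = - dunklY m c (dunklYb m c q)"

end

theory Submission
  imports Defs
begin

lemma cst_add: "cst (x + y) = cst x + cst y" by (simp add: cst_def)
lemma cst_mult: "cst (x * y) = cst x * cst y" by (simp add: cst_def)
lemma cst_0[simp]: "cst 0 = 0" by (simp add: cst_def)
lemma cst_1[simp]: "cst 1 = 1" by (simp add: cst_def one_pCons)
lemma cst_minus: "cst (- x) = - cst x" by (simp add: cst_def)
lemma cst_diff: "cst (x - y) = cst x - cst y" by (simp add: cst_def)
lemma cst_power: "cst (x ^ n) = cst x ^ n" by (induct n) (simp_all add: cst_mult)
lemma cst_sum: "cst (sum f A) = (\<Sum>a\<in>A. cst (f a))"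
  by (induct A rule: infinite_finite_induct) (simp_all add: cst_add)
lemma cst_of_nat: "cst (of_nat n) = of_nat n" by (induct n) (simp_all add: cst_add)

lemma mono_eq: "cst g * Zv ^ a * Zbv ^ b = monom (monom g a) b"
proof -
  have "Zv ^ a = [:monom 1 a:]" unfolding Zv_def
    by (induct a) (simp_all add: monom_Suc mult.commute)
  moreover have "Zbv ^ b = monom 1 b" unfolding Zbv_def
    by (simp add: monom_altdef)
  ultimately show ?thesis by (simp add: cst_def smult_monom monom_altdef)
qed

lemma zeta_pow: "zeta m ^ k = cis (2 * pi * real k / real m)"
  by (simp add: zeta_def DeMoivre mult.commute)

lemma zeta_pow_m: "m \<ge> 1 \<Longrightarrow> zeta m ^ m = 1"
  by (simp add: zeta_pow)

lemma zeta_nz: "zeta m \<noteq> 0" by (simp add: zeta_def)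

lemma zeta_pow_eq_1: assumes "m \<ge> 1" "zeta m ^ k = 1" shows "m dvd k"
proof -
  have "cos (2 * pi * real k / real m) = 1"
    using assms(2) unfolding zeta_pow by (metis cis.sel(1) one_complex.sel(1))
  then obtain t :: int where t: "2 * pi * real k / real m = real_of_int t * 2 * pi"
    unfolding cos_one_2pi_int by blast
  hence "real k = real m * t" using assms(1) by (simp add: field_simps)
  hence "int k = int m * t" by (metis of_int_eq_iff of_int_of_nat_eq of_int_mult)
  hence "int m dvd int k" by simp
  thus ?thesis by simp
qed

lemma zeta_pow_mod: "m \<ge> 1 \<Longrightarrow> zeta m ^ k = zeta m ^ (k mod m)"
proof -
  assume "m \<ge> 1"
  have "zeta m ^ k = zeta m ^ (m * (k div m) + k mod m)" by simp
  also have "\<dots> = (zeta m ^ m) ^ (k div m) * zeta m ^ (k mod m)"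
    by (simp only: power_add power_mult)
  also have "\<dots> = zeta m ^ (k mod m)" using zeta_pow_m[OF \<open>m \<ge> 1\<close>] by simp
  finally show ?thesis .
qed

lemma zeta_pow_eq_iff: assumes "m \<ge> 1" shows "zeta m ^ u = zeta m ^ v \<longleftrightarrow> u mod m = v mod m"
proof
  assume "u mod m = v mod m" thus "zeta m ^ u = zeta m ^ v"
    using zeta_pow_mod[OF assms] by metis
next
  assume h: "zeta m ^ u = zeta m ^ v"
  show "u mod m = v mod m"
  proof (cases "u \<le> v")
    case True
    hence "zeta m ^ v = zeta m ^ u * zeta m ^ (v - u)" by (metis le_add_diff_inverse power_add)
    hence "zeta m ^ (v - u) = 1" using h zeta_nz by simp
    hence "m dvd v - u" using zeta_pow_eq_1 assms by blast
    thus ?thesis using True by (metis mod_eq_dvd_iff_nat)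
  next
    case False
    hence "zeta m ^ u = zeta m ^ v * zeta m ^ (u - v)" by (metis le_add_diff_inverse nat_le_linear power_add)
    hence "zeta m ^ (u - v) = 1" using h zeta_nz by simp
    hence "m dvd u - v" using zeta_pow_eq_1 assms by blast
    thus ?thesis using False by (metis mod_eq_dvd_iff_nat nat_le_linear)
  qed
qed

lemma root_sum: assumes "m \<ge> 1"
  shows "(\<Sum>j<m. (zeta m ^ j) ^ u * (inverse (zeta m) ^ j) ^ v) = (if u mod m = v mod m then of_nat m else 0)"
proof -
  define w where "w = zeta m ^ u * inverse (zeta m ^ v)"
  have eq: "(zeta m ^ j) ^ u * (inverse (zeta m) ^ j) ^ v = w ^ j" for j
    by (simp add: w_def power_mult_distrib flip: power_mult power_inverse) (simp add: mult.commute)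
  have wm: "w ^ m = 1"
  proof -
    have "w ^ m = (zeta m ^ m) ^ u * inverse ((zeta m ^ m) ^ v)"
      by (simp add: w_def power_mult_distrib power_inverse flip: power_mult) (simp add: mult.commute)
    thus ?thesis using zeta_pow_m[OF assms] by simp
  qed
  show ?thesis
  proof (cases "u mod m = v mod m")
    case True
    hence "zeta m ^ u = zeta m ^ v" using zeta_pow_eq_iff[OF assms] by blast
    hence "w = 1" using zeta_nz by (simp add: w_def)
    thus ?thesis using True by (simp add: eq)
  next
    case False
    hence "w \<noteq> 1" using zeta_pow_eq_iff[OF assms] zeta_nz by (simp add: w_def field_simps)
    hence "(\<Sum>j<m. w ^ j) = 0" using wm by (simp add: geometric_sum)
    thus ?thesis using False by (simp add: eq)
  qed
qed

definition mn :: "complex \<Rightarrow> nat \<Rightarrow> nat \<Rightarrow> bipoly" where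
  "mn g a b = cst g * Zv ^ a * Zbv ^ b"

lemma mn_monom: "mn g a b = monom (monom g a) b"
  unfolding mn_def by (rule mono_eq)

lemma mn_mult: "mn g a b * mn h c d = mn (g * h) (a + c) (b + d)"
  unfolding mn_def by (simp add: cst_mult power_add algebra_simps)

lemma cst_mn: "cst h * mn g a b = mn (h * g) a b"
  unfolding mn_def by (simp add: cst_mult algebra_simps)

lemma mn_0[simp]: "mn 0 a b = 0" by (simp add: mn_def)

lemma mn_add: "mn g a b + mn h a b = mn (g + h) a b"
  unfolding mn_def by (simp add: cst_add algebra_simps)

lemma mn_minus: "- mn g a b = mn (- g) a b"
  unfolding mn_def by (simp add: cst_minus algebra_simps)

lemma mn_sum: "(\<Sum>k\<in>A. mn (f k) a b) = mn (sum f A) a b"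
  unfolding mn_def by (simp add: cst_sum sum_distrib_right)

definition F2 :: "bipoly \<Rightarrow> complex poly \<Rightarrow> bipoly" where
  "F2 X p = poly (map_poly cst p) X"

lemma eval2_F2: "eval2 q X Y = poly (map_poly (F2 X) q) Y"
  unfolding eval2_def F2_def ..

lemma F2_0[simp]: "F2 X 0 = 0" by (simp add: F2_def)

lemma map_cst_add: "map_poly cst (p + q) = map_poly cst p + map_poly cst q"
  by (intro poly_eqI) (simp add: coeff_map_poly cst_add)

lemma F2_add: "F2 X (p + q) = F2 X p + F2 X q"
  by (simp add: F2_def map_cst_add)

lemma map_F2_add: "map_poly (F2 X) (p + q) = map_poly (F2 X) p + map_poly (F2 X) q"
  by (intro poly_eqI) (simp add: coeff_map_poly F2_add)

lemma eval2_add: "eval2 (p + q) X Y = eval2 p X Y + eval2 q X Y"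
  by (simp add: eval2_F2 map_F2_add)

lemma eval2_0[simp]: "eval2 0 X Y = 0"
  by (simp add: eval2_def)

lemma eval2_sum: "eval2 (sum f A) X Y = (\<Sum>a\<in>A. eval2 (f a) X Y)"
  by (induct A rule: infinite_finite_induct) (simp_all add: eval2_add)

lemma eval2_minus: "eval2 (- p) X Y = - eval2 p X Y"
  using eval2_add[of p "-p" X Y] by (simp add: eq_neg_iff_add_eq_0 add.commute)

lemma eval2_diff: "eval2 (p - q) X Y = eval2 p X Y - eval2 q X Y"
  using eval2_add[of p "-q" X Y] by (simp add: eval2_minus)

lemma eval2_mn: "eval2 (mn g a b) X Y = cst g * X ^ a * Y ^ b"
  by (simp add: mn_monom eval2_F2 map_poly_monom F2_def poly_monom)

lemma cst_times: "cst g * q = smult [:g:] q"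
  by (simp add: cst_def)

lemma F2_smult: "F2 X (smult g p) = cst g * F2 X p"
proof -
  have "map_poly cst (smult g p) = smult (cst g) (map_poly cst p)"
    by (rule map_poly_smult) (simp_all add: cst_mult)
  thus ?thesis by (simp add: F2_def)
qed

lemma eval2_cst: "eval2 (cst g * p) X Y = cst g * eval2 p X Y"
proof -
  have "map_poly (F2 X) (smult [:g:] p) = smult (cst g) (map_poly (F2 X) p)"
    by (intro poly_eqI) (simp add: coeff_map_poly F2_smult)
  thus ?thesis by (simp add: eval2_F2 cst_times)
qed

lemma refl_mn: "refl_s m j (mn g a b) = mn (g * (- (zeta m ^ j)) ^ a * (- (inverse (zeta m) ^ j)) ^ b) b a"
  unfolding refl_s_def eval2_mn
  by (simp add: mn_def power_mult_distrib cst_mult cst_power algebra_simps)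

lemma refl_add: "refl_s m j (p + q) = refl_s m j p + refl_s m j q"
  by (simp add: refl_s_def eval2_add)
lemma refl_diff: "refl_s m j (p - q) = refl_s m j p - refl_s m j q"
  by (simp add: refl_s_def eval2_diff)
lemma refl_cst: "refl_s m j (cst g * q) = cst g * refl_s m j q"
  by (simp add: refl_s_def eval2_cst)
lemma refl_sum: "refl_s m j (sum f A) = (\<Sum>a\<in>A. refl_s m j (f a))"
  by (simp add: refl_s_def eval2_sum)

lemma dz_add: "dz (p + q) = dz p + dz q"
  unfolding dz_def by (intro poly_eqI) (simp add: coeff_map_poly pderiv_add)
lemma dz_0[simp]: "dz 0 = 0" by (simp add: dz_def)
lemma dz_sum: "dz (sum f A) = (\<Sum>a\<in>A. dz (f a))"
  by (induct A rule: infinite_finite_induct) (simp_all add: dz_add)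
lemma dz_cst: "dz (cst g * q) = cst g * dz q"
  unfolding dz_def cst_times by (intro poly_eqI) (simp add: coeff_map_poly pderiv_smult)
lemma dz_mn: "dz (mn g a b) = mn (g * of_nat a) (a - 1) b"
  unfolding dz_def mn_monom by (simp add: map_poly_monom pderiv_monom mult.commute)

lemma dzb_add: "dzb (p + q) = dzb p + dzb q"
  unfolding dzb_def by (simp add: pderiv_add)
lemma dzb_mn: "dzb (mn g a b) = mn (g * of_nat b) a (b - 1)"
  unfolding dzb_def mn_monom by (simp add: pderiv_monom of_nat_monom mult_monom mult.commute)

definition Dj :: "nat \<Rightarrow> nat \<Rightarrow> bipoly" where "Dj m j = Zv + cst (zeta m ^ j) * Zbv"
definition Ej :: "nat \<Rightarrow> nat \<Rightarrow> bipoly" where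
  "Ej m j = (\<Sum>i<m. Zv ^ (m - 1 - i) * (cst (- (zeta m ^ j)) * Zbv) ^ i)"
definition PP :: "nat \<Rightarrow> bipoly" where "PP m = Zv ^ m - (- Zbv) ^ m"

lemma diff_dvd_pow: "(u - v) dvd (u ^ n - v ^ (n::nat))" for u v :: "'a::comm_ring_1"
proof (cases n)
  case 0 then show ?thesis by simp
next
  case (Suc k) then show ?thesis using diff_power_eq_sum[of u k v] by simp
qed

lemma D_E: assumes "m \<ge> 1" shows "Dj m j * Ej m j = PP m"
proof -
  define Y where "Y = cst (- (zeta m ^ j)) * Zbv"
  obtain k where mk: "m = Suc k" using assms by (cases m) auto
  have "Zv ^ m - Y ^ m = (Zv - Y) * (\<Sum>p<m. Zv ^ p * Y ^ (k - p))"
    using diff_power_eq_sum[of Zv k Y] mk by simp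
  also have "(\<Sum>p<m. Zv ^ p * Y ^ (k - p)) = (\<Sum>i<m. Zv ^ (m - 1 - i) * Y ^ i)"
  proof -
    have "(\<Sum>p<m. Zv ^ p * Y ^ (k - p)) = (\<Sum>i<m. Zv ^ (m - Suc i) * Y ^ (k - (m - Suc i)))"
      by (rule sum.nat_diff_reindex[symmetric])
    also have "\<dots> = (\<Sum>i<m. Zv ^ (m - 1 - i) * Y ^ i)"
      by (rule sum.cong) (auto simp: mk)
    finally show ?thesis .
  qed
  also have "Zv - Y = Dj m j" by (simp add: Y_def Dj_def cst_minus)
  also have "Y ^ m = (- Zbv) ^ m"
  proof -
    have "(zeta m ^ j) ^ m = (zeta m ^ m) ^ j"
      by (simp only: power_mult[symmetric] mult.commute)
    hence "(zeta m ^ j) ^ m = 1" using zeta_pow_m[OF assms] by simp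
    hence e: "(- (zeta m ^ j)) ^ m = (-1) ^ m" by (subst power_minus) simp
    have "Y ^ m = cst (- (zeta m ^ j)) ^ m * Zbv ^ m"
      by (simp add: Y_def power_mult_distrib)
    also have "\<dots> = cst ((-1) ^ m) * Zbv ^ m"
      by (simp only: e flip: cst_power)
    also have "\<dots> = (-1) ^ m * Zbv ^ m"
      by (simp add: cst_power cst_minus)
    also have "\<dots> = (- Zbv) ^ m"
      by (rule power_minus[symmetric])
    finally show ?thesis .
  qed
  finally show ?thesis by (simp only: Ej_def Y_def PP_def)
qed

lemma Dj_nz: "Dj m j \<noteq> 0"
proof
  assume "Dj m j = 0"
  hence "coeff (Dj m j) 1 = 0" by simp
  thus False by (simp add: Dj_def Zv_def Zbv_def cst_def zeta_nz)
qed

lemma PP_nz: assumes "m \<ge> 1" shows "PP m \<noteq> 0"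
proof
  assume "PP m = 0"
  hence "coeff (PP m) 0 = 0" by simp
  hence "[:0, 1:] ^ m = (0 :: complex poly)" using assms
    by (simp add: PP_def coeff_0_power Zv_def Zbv_def)
  thus False by simp
qed

lemma Dj_dvd_mn: "Dj m j dvd (mn g a b - refl_s m j (mn g a b))"
proof -
  define X' where "X' = cst (- (zeta m ^ j)) * Zbv"
  define Y' where "Y' = cst (- (inverse (zeta m) ^ j)) * Zv"
  have r: "refl_s m j (mn g a b) = cst g * X' ^ a * Y' ^ b"
    unfolding refl_s_def eval2_mn X'_def Y'_def ..
  have d1: "Dj m j dvd Zv ^ a - X' ^ a"
  proof -
    have "Zv - X' = Dj m j" by (simp add: X'_def Dj_def cst_minus)
    thus ?thesis using diff_dvd_pow[of Zv X' a] by simp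
  qed
  have d2: "Dj m j dvd Zbv ^ b - Y' ^ b"
  proof -
    have "Zbv - Y' = cst (inverse (zeta m ^ j)) * Dj m j"
      by (simp add: Y'_def Dj_def cst_minus algebra_simps power_inverse zeta_nz flip: cst_mult)
    hence "Dj m j dvd Zbv - Y'" by simp
    thus ?thesis using diff_dvd_pow[of Zbv Y' b] dvd_trans by blast
  qed
  have "mn g a b - refl_s m j (mn g a b) = cst g * ((Zv ^ a - X' ^ a) * Zbv ^ b + X' ^ a * (Zbv ^ b - Y' ^ b))"
    unfolding r by (simp add: mn_def algebra_simps)
  thus ?thesis using d1 d2 by (simp add: dvd_add dvd_mult2 dvd_mult)
qed

lemma Y_char:
  assumes "m \<ge> 1" and dv: "\<And>j. j < m \<Longrightarrow> Dj m j dvd (q - refl_s m j q)"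
  shows "PP m * dunklY m c q = PP m * dz q - cst c * (\<Sum>j<m. Ej m j * (q - refl_s m j q))"
proof -
  have "PP m * ((q - refl_s m j q) div Dj m j) = Ej m j * (q - refl_s m j q)" if jm: "j < m" for j
  proof -
    obtain t where t: "q - refl_s m j q = Dj m j * t" using dv[OF jm] by blast
    have "(q - refl_s m j q) div Dj m j = t" unfolding t using Dj_nz by simp
    thus ?thesis unfolding t using D_E[OF assms(1), of j] by (simp add: algebra_simps)
  qed
  hence "PP m * (\<Sum>j<m. (q - refl_s m j q) div Dj m j) = (\<Sum>j<m. Ej m j * (q - refl_s m j q))"
    by (simp add: sum_distrib_left)
  thus ?thesis unfolding dunklY_def Dj_def[symmetric] by (simp add: algebra_simps)
qed

lemma Yb_char:
  assumes "m \<ge> 1" and dv: "\<And>j. j < m \<Longrightarrow> Dj m j dvd (q - refl_s m j q)"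
  shows "PP m * dunklYb m c q = PP m * dzb q - cst c * (\<Sum>j<m. cst (zeta m ^ j) * Ej m j * (q - refl_s m j q))"
proof -
  have "PP m * ((q - refl_s m j q) div (Zbv + cst (inverse (zeta m) ^ j) * Zv)) = cst (zeta m ^ j) * Ej m j * (q - refl_s m j q)" if jm: "j < m" for j
  proof -
    obtain t where t: "q - refl_s m j q = Dj m j * t" using dv[OF jm] by blast
    have db: "Zbv + cst (inverse (zeta m) ^ j) * Zv = cst (inverse (zeta m ^ j)) * Dj m j"
      by (simp add: Dj_def algebra_simps power_inverse zeta_nz flip: cst_mult)
    have "q - refl_s m j q = (Zbv + cst (inverse (zeta m) ^ j) * Zv) * (cst (zeta m ^ j) * t)"
      unfolding t db by (simp add: algebra_simps zeta_nz flip: cst_mult)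
    moreover have "Zbv + cst (inverse (zeta m) ^ j) * Zv \<noteq> 0"
      unfolding db using Dj_nz zeta_nz by (simp add: cst_def)
    ultimately have "(q - refl_s m j q) div (Zbv + cst (inverse (zeta m) ^ j) * Zv) = cst (zeta m ^ j) * t"
      by simp
    thus ?thesis unfolding t using D_E[OF assms(1), of j] by (simp add: algebra_simps)
  qed
  hence "PP m * (\<Sum>j<m. (q - refl_s m j q) div (Zbv + cst (inverse (zeta m) ^ j) * Zv)) = (\<Sum>j<m. cst (zeta m ^ j) * Ej m j * (q - refl_s m j q))"
    by (simp add: sum_distrib_left)
  thus ?thesis unfolding dunklYb_def by (simp add: algebra_simps)
qed

lemma dvd_sum_mn: "Dj m j dvd ((\<Sum>k\<in>A. mn (f k) (al k) (be k)) - refl_s m j (\<Sum>k\<in>A. mn (f k) (al k) (be k)))"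
  unfolding refl_sum sum_subtractf[symmetric] by (rule dvd_sum) (rule Dj_dvd_mn)

lemma mod_unique: assumes "i < m" "i' < (m::nat)" "(e + i) mod m = (e + i') mod m" shows "i = i'"
proof (cases "i \<le> i'")
  case True
  hence "m dvd (e + i') - (e + i)" using assms(3) mod_eq_dvd_iff_nat[of "e+i" "e+i'" m] by simp
  hence "m dvd i' - i" by simp
  moreover have "i' - i < m" using assms by simp
  ultimately show ?thesis using True by (metis diff_is_0_eq dvd_imp_le le_antisym not_less zero_less_diff)
next
  case False
  hence "m dvd (e + i) - (e + i')" using assms(3) mod_eq_dvd_iff_nat[of "e+i'" "e+i" m] by simp
  hence "m dvd i - i'" by simp
  moreover have "i - i' < m" using assms by simp
  ultimately show ?thesis using False by (metis diff_is_0_eq dvd_imp_le nat_le_linear not_less zero_less_diff)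
qed

lemma sum_delta_mn: fixes i1 m :: nat assumes "i1 < m" "\<And>i. i < m \<Longrightarrow> P i \<longleftrightarrow> i = i1"
  shows "(\<Sum>i<m. mn (if P i then X i else 0) (A i) (B i)) = mn (X i1) (A i1) (B i1)"
proof -
  have "(\<Sum>i<m. mn (if P i then X i else 0) (A i) (B i)) = (\<Sum>i<m. if i = i1 then mn (X i) (A i) (B i) else 0)"
    by (rule sum.cong) (auto simp: assms(2))
  also have "\<dots> = mn (X i1) (A i1) (B i1)" using assms(1) by (simp add: sum.delta[OF finite_lessThan])
  finally show ?thesis .
qed

lemma sum_expand: "(a::'a::comm_ring) * sum f S * (b - c) = (\<Sum>i\<in>S. a * f i * b - a * f i * c)"
  by (simp add: sum_distrib_left sum_distrib_right right_diff_distrib sum_subtractf)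

lemma Ej_mn: "Ej m j = (\<Sum>i<m. mn ((- (zeta m ^ j)) ^ i) (m - 1 - i) i)"
  unfolding Ej_def mn_def by (simp add: power_mult_distrib cst_power algebra_simps)

lemma mono_sum:
  assumes m1: "m \<ge> 1" and i1: "i1 < m" "(e + i1) mod m = 0"
    and i2: "i2 < m" "(e + i2 + al) mod m = be mod m"
  shows "(\<Sum>j<m. cst ((zeta m ^ j) ^ e) * Ej m j * (mn g al be - refl_s m j (mn g al be))) =
    cst (of_nat m) * (mn (g * (-1) ^ i1) (m - 1 - i1 + al) (i1 + be)
       - mn (g * (-1) ^ (i2 + al + be)) (m - 1 - i2 + be) (i2 + al))"
proof -
  define c1 where "c1 j i = g * (-1) ^ i * ((zeta m ^ j) ^ (e + i) * (inverse (zeta m) ^ j) ^ 0)" for j i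
  define c2 where "c2 j i = g * (-1) ^ (i + al + be) * ((zeta m ^ j) ^ (e + i + al) * (inverse (zeta m) ^ j) ^ be)" for j i
  have tm_eq: "cst ((zeta m ^ j) ^ e) * Ej m j * (mn g al be - refl_s m j (mn g al be)) =
     (\<Sum>i<m. mn (c1 j i) (m - 1 - i + al) (i + be) - mn (c2 j i) (m - 1 - i + be) (i + al))" for j
  proof -
    have "cst ((zeta m ^ j) ^ e) * Ej m j * (mn g al be - refl_s m j (mn g al be)) =
      (\<Sum>i<m. cst ((zeta m ^ j) ^ e) * mn ((- (zeta m ^ j)) ^ i) (m - 1 - i) i * mn g al be
           - cst ((zeta m ^ j) ^ e) * mn ((- (zeta m ^ j)) ^ i) (m - 1 - i) i * mn (g * (- (zeta m ^ j)) ^ al * (- (inverse (zeta m) ^ j)) ^ be) be al)"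
      unfolding Ej_mn refl_mn by (rule sum_expand)
    also have "\<dots> = (\<Sum>i<m. mn (c1 j i) (m - 1 - i + al) (i + be) - mn (c2 j i) (m - 1 - i + be) (i + al))"
    proof (rule sum.cong[OF refl])
      fix i
      have e1: "(zeta m ^ j) ^ e * (- (zeta m ^ j)) ^ i * g = c1 j i"
        unfolding c1_def power_minus[of "zeta m ^ j"] by (simp add: power_add mult_ac)
      have e2: "(zeta m ^ j) ^ e * (- (zeta m ^ j)) ^ i * (g * (- (zeta m ^ j)) ^ al * (- (inverse (zeta m) ^ j)) ^ be) = c2 j i"
        unfolding c2_def power_minus[of "zeta m ^ j"] power_minus[of "inverse (zeta m) ^ j"] by (simp add: power_add mult_ac)
      show "cst ((zeta m ^ j) ^ e) * mn ((- (zeta m ^ j)) ^ i) (m - 1 - i) i * mn g al be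
           - cst ((zeta m ^ j) ^ e) * mn ((- (zeta m ^ j)) ^ i) (m - 1 - i) i * mn (g * (- (zeta m ^ j)) ^ al * (- (inverse (zeta m) ^ j)) ^ be) be al
           = mn (c1 j i) (m - 1 - i + al) (i + be) - mn (c2 j i) (m - 1 - i + be) (i + al)"
        unfolding cst_mn mn_mult e1 e2 by simp
    qed
    finally show ?thesis .
  qed
  have s1: "(\<Sum>j<m. c1 j i) = g * (-1) ^ i * (if (e + i) mod m = 0 then of_nat m else 0)" for i
    unfolding c1_def sum_distrib_left[symmetric] root_sum[OF m1] by simp
  have s2: "(\<Sum>j<m. c2 j i) = g * (-1) ^ (i + al + be) * (if (e + i + al) mod m = be mod m then of_nat m else 0)" for i
    unfolding c2_def sum_distrib_left[symmetric] root_sum[OF m1] by simp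
  have "(\<Sum>j<m. cst ((zeta m ^ j) ^ e) * Ej m j * (mn g al be - refl_s m j (mn g al be)))
     = (\<Sum>i<m. mn (\<Sum>j<m. c1 j i) (m - 1 - i + al) (i + be)) - (\<Sum>i<m. mn (\<Sum>j<m. c2 j i) (m - 1 - i + be) (i + al))"
    unfolding tm_eq by (subst sum.swap) (simp add: sum_subtractf mn_sum)
  also have "(\<Sum>i<m. mn (\<Sum>j<m. c1 j i) (m - 1 - i + al) (i + be)) = mn (g * (-1) ^ i1 * of_nat m) (m - 1 - i1 + al) (i1 + be)"
  proof -
    have "(\<Sum>i<m. mn (\<Sum>j<m. c1 j i) (m - 1 - i + al) (i + be)) = (\<Sum>i<m. mn (if (e + i) mod m = 0 then g * (-1) ^ i * of_nat m else 0) (m - 1 - i + al) (i + be))"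
      unfolding s1 by (rule sum.cong) auto
    also have "\<dots> = mn (g * (-1) ^ i1 * of_nat m) (m - 1 - i1 + al) (i1 + be)"
    proof (rule sum_delta_mn[OF i1(1)])
      fix i assume "i < m"
      show "(e + i) mod m = 0 \<longleftrightarrow> i = i1"
        using mod_unique[OF \<open>i < m\<close> i1(1), of e] i1(2) by auto
    qed
    finally show ?thesis .
  qed
  also have "(\<Sum>i<m. mn (\<Sum>j<m. c2 j i) (m - 1 - i + be) (i + al)) = mn (g * (-1) ^ (i2 + al + be) * of_nat m) (m - 1 - i2 + be) (i2 + al)"
  proof -
    have "(\<Sum>i<m. mn (\<Sum>j<m. c2 j i) (m - 1 - i + be) (i + al)) = (\<Sum>i<m. mn (if (e + i + al) mod m = be mod m then g * (-1) ^ (i + al + be) * of_nat m else 0) (m - 1 - i + be) (i + al))"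
      unfolding s2 by (rule sum.cong) auto
    also have "\<dots> = mn (g * (-1) ^ (i2 + al + be) * of_nat m) (m - 1 - i2 + be) (i2 + al)"
    proof (rule sum_delta_mn[OF i2(1)])
      fix i assume "i < m"
      have "(e + i + al) mod m = ((e + al) + i) mod m" "(e + i2 + al) mod m = ((e + al) + i2) mod m"
        by (simp_all add: ac_simps)
      thus "(e + i + al) mod m = be mod m \<longleftrightarrow> i = i2"
        using mod_unique[OF \<open>i < m\<close> i2(1), of "e + al"] i2(2) by auto
    qed
    finally show ?thesis .
  qed
  finally show ?thesis by (simp add: cst_mn right_diff_distrib mult.commute mult.left_commute cst_of_nat[symmetric])
qed

lemma PP_mn: "PP m = mn 1 m 0 - mn ((-1) ^ m) 0 m"
  unfolding PP_def mn_def by (simp add: power_minus[of Zbv] cst_power cst_minus)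

lemma mn_cong: "g = h \<Longrightarrow> a = c \<Longrightarrow> b = d \<Longrightarrow> mn g a b = mn h c d" by simp

lemma tele: "PP m * (\<Sum>k<L. mn ((-1) ^ (m * k)) (r + m * (L - 1 - k)) (B + m * k))
   = mn 1 (r + m * L) B - mn ((-1) ^ (m * L)) r (B + m * L)"
proof (induct L)
  case 0 then show ?case by simp
next
  case (Suc L)
  have "(\<Sum>k<Suc L. mn ((-1) ^ (m * k)) (r + m * (Suc L - 1 - k)) (B + m * k))
     = mn 1 m 0 * (\<Sum>k<L. mn ((-1) ^ (m * k)) (r + m * (L - 1 - k)) (B + m * k)) + mn ((-1) ^ (m * L)) r (B + m * L)"
  proof -
    have "(\<Sum>k<L. mn ((-1) ^ (m * k)) (r + m * (Suc L - 1 - k)) (B + m * k))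
        = (\<Sum>k<L. mn 1 m 0 * mn ((-1) ^ (m * k)) (r + m * (L - 1 - k)) (B + m * k))"
    proof (rule sum.cong[OF refl])
      fix k assume "k \<in> {..<L}"
      hence "Suc L - 1 - k = Suc (L - 1 - k)" by simp
      hence "r + m * (Suc L - 1 - k) = m + (r + m * (L - 1 - k))" by simp
      thus "mn ((-1) ^ (m * k)) (r + m * (Suc L - 1 - k)) (B + m * k) = mn 1 m 0 * mn ((-1) ^ (m * k)) (r + m * (L - 1 - k)) (B + m * k)"
        by (simp add: mn_mult add_ac)
    qed
    thus ?thesis by (simp add: sum_distrib_left)
  qed
  hence "PP m * (\<Sum>k<Suc L. mn ((-1) ^ (m * k)) (r + m * (Suc L - 1 - k)) (B + m * k))
     = mn 1 m 0 * (mn 1 (r + m * L) B - mn ((-1) ^ (m * L)) r (B + m * L)) + PP m * mn ((-1) ^ (m * L)) r (B + m * L)"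
  proof -
    have "PP m * (\<Sum>k<Suc L. mn ((-1) ^ (m * k)) (r + m * (Suc L - 1 - k)) (B + m * k))
      = mn 1 m 0 * (PP m * (\<Sum>k<L. mn ((-1) ^ (m * k)) (r + m * (L - 1 - k)) (B + m * k))) + PP m * mn ((-1) ^ (m * L)) r (B + m * L)"
      unfolding \<open>(\<Sum>k<Suc L. _) = _\<close> by (simp only: distrib_left mult.left_commute)
    thus ?thesis unfolding Suc .
  qed
  also have "\<dots> = mn 1 (m + (r + m * L)) B - mn ((-1) ^ m * (-1) ^ (m * L)) r (m + (B + m * L))"
    unfolding PP_mn by (simp add: algebra_simps mn_mult)
  also have "\<dots> = mn 1 (r + m * Suc L) B - mn ((-1) ^ (m * Suc L)) r (B + m * Suc L)"
    by (simp add: algebra_simps power_add)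
  finally show ?case .
qed

lemma sgn_eq: "even (p + q) \<Longrightarrow> (-1::complex) ^ p = (-1) ^ q"
  by (auto simp: minus_one_power_iff)
lemma sgn_neg: "odd (p + q) \<Longrightarrow> (-1::complex) ^ p = - ((-1) ^ q)"
  by (auto simp: minus_one_power_iff)

lemma mn_neg: "mn (- g) a b = - mn g a b" by (simp add: mn_minus)

lemma sum1N: "(\<Sum>k\<in>{1..N}. f k) = (\<Sum>k<N. f (Suc k))"
  using sum.atLeast1_atMost_eq[of f N] by simp

lemma stepA:
  assumes m: "m \<ge> 2" and a: "a = b + r + m * N" and r: "r < m"
  shows "(\<Sum>j<m. cst (zeta m ^ j) * Ej m j * (mn 1 a b - refl_s m j (mn 1 a b)))
     = PP m * (- (cst (of_nat m) * (\<Sum>k\<in>{1..N}. mn ((-1) ^ (m * k)) (a - m * k) (b + m * k - 1))))"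
proof -
  define i0 where "i0 = m - 1 - r"
  have m1: "m \<ge> 1" using m by simp
  have c1: "(1 + (m - 1)) mod m = 0" using m1 by simp
  have c2: "(1 + i0 + a) mod m = b mod m"
  proof -
    have "1 + i0 + a = b + m * (Suc N)" using r m1 by (simp add: i0_def a)
    thus ?thesis by (simp only: mod_mult_self2)
  qed
  have "(\<Sum>j<m. cst ((zeta m ^ j) ^ 1) * Ej m j * (mn 1 a b - refl_s m j (mn 1 a b)))
     = cst (of_nat m) * (mn (1 * (-1) ^ (m - 1)) (m - 1 - (m - 1) + a) (m - 1 + b)
       - mn (1 * (-1) ^ (i0 + a + b)) (m - 1 - i0 + b) (i0 + a))"
    by (rule mono_sum[OF m1 _ c1 _ c2]) (use m1 r in \<open>simp_all add: i0_def\<close>)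
  hence L: "(\<Sum>j<m. cst (zeta m ^ j) * Ej m j * (mn 1 a b - refl_s m j (mn 1 a b)))
     = cst (of_nat m) * (mn ((-1) ^ (m - 1)) a (b + m - 1) - mn ((-1) ^ (i0 + a + b)) (b + r) (b + m - 1 + m * N))"
    using m1 r by (simp add: i0_def a add_ac)
  have P: "(\<Sum>k\<in>{1..N}. mn ((-1) ^ (m * k)) (a - m * k) (b + m * k - 1))
     = cst ((-1) ^ m) * (\<Sum>k<N. mn ((-1) ^ (m * k)) ((b + r) + m * (N - 1 - k)) ((b + m - 1) + m * k))"
    unfolding sum1N sum_distrib_left
  proof (rule sum.cong[OF refl])
    fix k assume "k \<in> {..<N}"
    hence k: "k < N" by simp
    have e1: "a - m * Suc k = (b + r) + m * (N - 1 - k)"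
    proof -
      have "N = Suc k + (N - 1 - k)" using k by simp
      hence "m * N = m * Suc k + m * (N - 1 - k)" by (metis distrib_left)
      thus ?thesis by (simp add: a)
    qed
    have e2: "b + m * Suc k - 1 = (b + m - 1) + m * k" using m1 by simp
    show "mn ((-1) ^ (m * Suc k)) (a - m * Suc k) (b + m * Suc k - 1)
       = cst ((-1) ^ m) * mn ((-1) ^ (m * k)) ((b + r) + m * (N - 1 - k)) ((b + m - 1) + m * k)"
      unfolding e1 e2 cst_mn by (simp add: power_add)
  qed
  have PP_P: "PP m * (\<Sum>k\<in>{1..N}. mn ((-1) ^ (m * k)) (a - m * k) (b + m * k - 1))
     = cst ((-1) ^ m) * (mn 1 a (b + m - 1) - mn ((-1) ^ (m * N)) (b + r) (b + m - 1 + m * N))"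
    unfolding P using tele[where m=m and L=N and r="b + r" and B="b + m - 1"] by (simp add: a mult.left_commute add_ac)
  have s1: "(-1::complex) ^ (m - 1) = - ((-1) ^ m)"
    by (rule sgn_neg) (use m1 in presburger)
  have s2: "(-1::complex) ^ (i0 + a + b) = - ((-1) ^ m * (-1) ^ (m * N))"
  proof -
    have "i0 + a + b + (m + m * N) = 2 * (b + m + m * N) - 1" using m1 r by (simp add: i0_def a)
    hence "odd (i0 + a + b + (m + m * N))" using m1 by simp
    thus ?thesis using sgn_neg[of "i0 + a + b" "m + m * N"] by (simp add: power_add)
  qed
  show ?thesis unfolding L mult_minus_right mult.left_commute[of "PP m"] PP_P s1 s2
    by (simp add: right_diff_distrib cst_mn mn_neg)
qed

lemma refl_zero[simp]: "refl_s m j 0 = 0" by (simp add: refl_s_def)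

lemma stepC1:
  assumes m: "m \<ge> 2" and a: "a = b + r + m * N" and r: "r < m"
  shows "(\<Sum>j<m. Ej m j * (mn (of_nat b) a (b - 1) - refl_s m j (mn (of_nat b) a (b - 1))))
     = cst (of_nat b) * cst (of_nat m) * PP m * (mn 1 (a - 1) (b - 1) + (\<Sum>k\<in>{1..N}. mn ((-1) ^ (m * k)) (a - m * k - 1) (b + m * k - 1)))"
proof (cases "b = 0")
  case True then show ?thesis by simp
next
  case False
  hence b1: "b \<ge> 1" by simp
  define i0 where "i0 = m - 1 - r"
  have m1: "m \<ge> 1" using m by simp
  have c2: "(0 + i0 + a) mod m = (b - 1) mod m"
  proof -
    have "0 + i0 + a = (b - 1) + m * (Suc N)" using r m1 b1 by (simp add: i0_def a)
    thus ?thesis by (simp only: mod_mult_self2)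
  qed
  have "(\<Sum>j<m. cst ((zeta m ^ j) ^ 0) * Ej m j * (mn (of_nat b) a (b - 1) - refl_s m j (mn (of_nat b) a (b - 1))))
     = cst (of_nat m) * (mn (of_nat b * (-1) ^ 0) (m - 1 - 0 + a) (0 + (b - 1))
       - mn (of_nat b * (-1) ^ (i0 + a + (b - 1))) (m - 1 - i0 + (b - 1)) (i0 + a))"
    by (rule mono_sum[OF m1 _ _ _ c2]) (use m1 r in \<open>simp_all add: i0_def\<close>)
  hence L: "(\<Sum>j<m. Ej m j * (mn (of_nat b) a (b - 1) - refl_s m j (mn (of_nat b) a (b - 1))))
     = cst (of_nat m) * (mn (of_nat b) ((b - 1 + r) + m * Suc N) (b - 1)
       - mn (of_nat b * (-1) ^ (i0 + a + (b - 1))) (b - 1 + r) (b - 1 + m * Suc N))"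
    using m1 r b1 by (simp add: i0_def a add_ac)
  have Q: "mn 1 (a - 1) (b - 1) + (\<Sum>k\<in>{1..N}. mn ((-1) ^ (m * k)) (a - m * k - 1) (b + m * k - 1))
     = (\<Sum>k<Suc N. mn ((-1) ^ (m * k)) ((b - 1 + r) + m * (Suc N - 1 - k)) ((b - 1) + m * k))"
    unfolding sum1N sum.lessThan_Suc_shift
  proof -
    have "(\<Sum>k<N. mn ((-1) ^ (m * Suc k)) (a - m * Suc k - 1) (b + m * Suc k - 1))
      = (\<Sum>k<N. mn ((-1) ^ (m * Suc k)) ((b - 1 + r) + m * (Suc N - 1 - Suc k)) ((b - 1) + m * Suc k))"
    proof (rule sum.cong[OF refl])
      fix k assume "k \<in> {..<N}"
      hence k: "k < N" by simp
      have e1: "a - m * Suc k - 1 = (b - 1 + r) + m * (Suc N - 1 - Suc k)"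
      proof -
        have "N = Suc k + (N - 1 - k)" using k by simp
        hence "m * N = m * Suc k + m * (N - 1 - k)" by (metis distrib_left)
        thus ?thesis using b1 by (simp add: a)
      qed
      have e2: "b + m * Suc k - 1 = (b - 1) + m * Suc k" using b1 by simp
      show "mn ((-1) ^ (m * Suc k)) (a - m * Suc k - 1) (b + m * Suc k - 1)
        = mn ((-1) ^ (m * Suc k)) ((b - 1 + r) + m * (Suc N - 1 - Suc k)) ((b - 1) + m * Suc k)"
        unfolding e1 e2 ..
    qed
    moreover have "a - 1 = b - 1 + r + m * (Suc N - 1 - 0)" using b1 by (simp add: a)
    ultimately show "mn 1 (a - 1) (b - 1) + (\<Sum>k<N. mn ((-1) ^ (m * Suc k)) (a - m * Suc k - 1) (b + m * Suc k - 1))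
      = mn ((-1) ^ (m * 0)) (b - 1 + r + m * (Suc N - 1 - 0)) (b - 1 + m * 0) +
        (\<Sum>k<N. mn ((-1) ^ (m * Suc k)) (b - 1 + r + m * (Suc N - 1 - Suc k)) (b - 1 + m * Suc k))"
      by simp
  qed
  have s: "(-1::complex) ^ (i0 + a + (b - 1)) = (-1) ^ (m * Suc N)"
  proof (rule sgn_eq)
    have "i0 + a + (b - 1) + m * Suc N = 2 * (m + m * N + b - 1)" using m1 r b1 by (simp add: i0_def a)
    thus "even (i0 + a + (b - 1) + m * Suc N)" by simp
  qed
  have T: "PP m * (\<Sum>k<Suc N. mn ((-1) ^ (m * k)) ((b - 1 + r) + m * (Suc N - 1 - k)) ((b - 1) + m * k))
    = mn 1 ((b - 1 + r) + m * Suc N) (b - 1) - mn ((-1) ^ (m * Suc N)) (b - 1 + r) ((b - 1) + m * Suc N)"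
    by (rule tele)
  have "cst (of_nat b) * cst (of_nat m) * PP m * (mn 1 (a - 1) (b - 1) + (\<Sum>k\<in>{1..N}. mn ((-1) ^ (m * k)) (a - m * k - 1) (b + m * k - 1)))
    = cst (of_nat b) * cst (of_nat m) * (mn 1 ((b - 1 + r) + m * Suc N) (b - 1) - mn ((-1) ^ (m * Suc N)) (b - 1 + r) ((b - 1) + m * Suc N))"
    unfolding Q mult.assoc[of _ "PP m"] T ..
  thus ?thesis unfolding L s
    by (simp add: right_diff_distrib cst_mn mult_ac)
qed

lemma parity_helper: "even (x + x)" for x :: nat by simp

lemma stepC2:
  assumes m: "m \<ge> 2" and a: "a = b + r + m * N" and r: "r < m"
  shows "(\<Sum>k\<in>{1..N}. (\<Sum>j<m. Ej m j * (mn ((-1) ^ (m * k)) (a - m * k) (b + m * k - 1) - refl_s m j (mn ((-1) ^ (m * k)) (a - m * k) (b + m * k - 1))))) = 0"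
proof -
  define i0 where "i0 = m - 1 - r"
  have m1: "m \<ge> 1" using m by simp
  define fA where "fA k = mn ((-1) ^ (m * k) * (-1) ^ 0) (m - 1 - 0 + (a - m * k)) (0 + (b + m * k - 1))" for k
  define fB where "fB k = mn ((-1) ^ (m * k) * (-1) ^ (i0 + (a - m * k) + (b + m * k - 1))) (m - 1 - i0 + (b + m * k - 1)) (i0 + (a - m * k))" for k
  have each: "(\<Sum>j<m. Ej m j * (mn ((-1) ^ (m * k)) (a - m * k) (b + m * k - 1) - refl_s m j (mn ((-1) ^ (m * k)) (a - m * k) (b + m * k - 1))))
     = cst (of_nat m) * (fA k - fB k)" if k: "k \<in> {1..N}" for k
  proof -
    have mk: "m * k \<le> m * N" "m \<le> m * k" using k by auto
    have c2: "(0 + i0 + (a - m * k)) mod m = (b + m * k - 1) mod m"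
    proof -
      have "0 + i0 + (a - m * k) = (b + m - 1) + (m * N - m * k)" using mk r m1
        unfolding i0_def a by arith
      hence "0 + i0 + (a - m * k) = (b + m - 1) + m * (N - k)" by (simp only: diff_mult_distrib2)
      moreover have "b + m * k - 1 = (b + m - 1) + (m * k - m)" using mk m1 by arith
      hence "b + m * k - 1 = (b + m - 1) + m * (k - 1)" by (simp only: diff_mult_distrib2 mult_1_right)
      ultimately show ?thesis by (simp only: mod_mult_self2)
    qed
    have "(\<Sum>j<m. cst ((zeta m ^ j) ^ 0) * Ej m j * (mn ((-1) ^ (m * k)) (a - m * k) (b + m * k - 1) - refl_s m j (mn ((-1) ^ (m * k)) (a - m * k) (b + m * k - 1))))
       = cst (of_nat m) * (fA k - fB k)"
      unfolding fA_def fB_def by (rule mono_sum[OF m1 _ _ _ c2]) (use m1 r in \<open>simp_all add: i0_def\<close>)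
    thus ?thesis by simp
  qed
  have "(\<Sum>k\<in>{1..N}. fA k) = (\<Sum>k\<in>{1..N}. fB k)"
  proof (rule sum.reindex_bij_witness[where i="\<lambda>k. N + 1 - k" and j="\<lambda>k. N + 1 - k"])
    fix k assume k: "k \<in> {1..N}"
    show "N + 1 - (N + 1 - k) = k" using k by auto
    show "N + 1 - k \<in> {1..N}" using k by auto
    define k' where "k' = N + 1 - k"
    have kk: "m * k + m * k' = m * N + m" using k by (simp add: k'_def flip: distrib_left)
    have mk: "m * k \<le> m * N" "m \<le> m * k" "m * k' \<le> m * N" "m \<le> m * k'" using k by (auto simp: k'_def)
    have x1: "m - 1 - i0 + (b + m * k' - 1) = m - 1 - 0 + (a - m * k)"
      using kk mk r m1 unfolding i0_def a by arith
    have x2: "i0 + (a - m * k') = 0 + (b + m * k - 1)"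
      using kk mk r m1 unfolding i0_def a by arith
    have x3: "(-1::complex) ^ (m * k') * (-1) ^ (i0 + (a - m * k') + (b + m * k' - 1)) = (-1) ^ (m * k) * (-1) ^ 0"
    proof -
      have "m * k' + (i0 + (a - m * k') + (b + m * k' - 1)) + m * k = 2 * (m * N + m + b - 1)"
        using kk mk r m1 unfolding i0_def a by arith
      hence "even (m * k' + (i0 + (a - m * k') + (b + m * k' - 1)) + m * k)" by simp
      thus ?thesis using sgn_eq[of "m * k' + (i0 + (a - m * k') + (b + m * k' - 1))" "m * k"]
        by (simp add: power_add)
    qed
    show "fB (N + 1 - k) = fA k" unfolding fA_def fB_def k'_def[symmetric] by (rule mn_cong[OF x3 x1 x2])
  next
    fix k :: nat assume k: "k \<in> {1..N}"
    show "N + 1 - (N + 1 - k) = k" using k by auto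
    show "N + 1 - k \<in> {1..N}" using k by auto
  qed
  hence "(\<Sum>k\<in>{1..N}. cst (of_nat m) * (fA k - fB k)) = 0"
    by (simp add: sum_distrib_left[symmetric] sum_subtractf)
  thus ?thesis using each by simp
qed

lemma refl_dvd_add: "Dj m j dvd (p - refl_s m j p) \<Longrightarrow> Dj m j dvd (q - refl_s m j q) \<Longrightarrow>
   Dj m j dvd ((p + cst g * q) - refl_s m j (p + cst g * q))"
proof -
  assume "Dj m j dvd (p - refl_s m j p)" "Dj m j dvd (q - refl_s m j q)"
  moreover have eq: "(p + cst g * q) - refl_s m j (p + cst g * q) = (p - refl_s m j p) + cst g * (q - refl_s m j q)"
    unfolding refl_add refl_cst by (simp add: algebra_simps)
  ultimately show ?thesis unfolding eq by (simp add: dvd_add dvd_mult)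
qed

lemma mn_diff: "mn g a b - mn h a b = mn (g - h) a b"
  unfolding mn_def by (simp add: cst_diff algebra_simps)

lemma lin_comb:
  "- (mn A X Y + cst c * (cst m * (\<Sum>k\<in>K. mn (f k) (u k) (v k))))
   + cst c * (cst b * cst m * (mn 1 X Y + (\<Sum>k\<in>K. mn (g k) (u k) (v k))))
   = mn (c * b * m - A) X Y + (\<Sum>k\<in>K. mn (c * b * m * g k - c * m * f k) (u k) (v k))"
proof -
  have e1: "cst c * (cst m * (\<Sum>k\<in>K. mn (f k) (u k) (v k))) = (\<Sum>k\<in>K. mn (c * m * f k) (u k) (v k))"
    by (simp add: sum_distrib_left cst_mn mult.assoc)
  have e2: "cst c * (cst b * cst m * (mn 1 X Y + (\<Sum>k\<in>K. mn (g k) (u k) (v k))))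
     = mn (c * b * m) X Y + (\<Sum>k\<in>K. mn (c * b * m * g k) (u k) (v k))"
  proof -
    have h: "cst c * (cst b * cst m * Z) = cst (c * b * m) * Z" for Z
      by (simp add: cst_mult mult.assoc)
    show ?thesis by (simp only: h distrib_left sum_distrib_left cst_mn mult_1_right)
  qed
  have e3: "(\<Sum>k\<in>K. mn (c * b * m * g k) (u k) (v k)) - (\<Sum>k\<in>K. mn (c * m * f k) (u k) (v k))
     = (\<Sum>k\<in>K. mn (c * b * m * g k - c * m * f k) (u k) (v k))"
    by (simp add: sum_subtractf[symmetric] mn_diff)
  have e4: "mn (c * b * m) X Y - mn A X Y = mn (c * b * m - A) X Y" by (rule mn_diff)
  show ?thesis unfolding e1 e2 e3[symmetric] e4[symmetric] by (simp only: diff_conv_add_uminus add_ac minus_add_distrib)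
qed

theorem proposition2p4:
  fixes m a b :: nat and c :: complex
  assumes "m \<ge> 2" and "a \<ge> b"
  shows "dunklF m c (Zv ^ a * Zbv ^ b) =
    cst ((of_nat m * c - of_nat a) * of_nat b) * Zv ^ (a - 1) * Zbv ^ (b - 1)
    - cst (of_nat m * c) * (\<Sum>k\<in>{1..(a - b) div m}.
        cst ((-1) ^ (m * k) * of_nat (a - b - m * k)) * Zv ^ (a - m * k - 1) * Zbv ^ (b + m * k - 1))"
proof -
  have m: "m \<ge> 2" by fact
  have m1: "m \<ge> 1" using m by simp
  define N where "N = (a - b) div m"
  define r where "r = (a - b) mod m"
  have a: "a = b + r + m * N" using assms(2) unfolding N_def r_def
    by (metis add.assoc add.commute div_mult_mod_eq le_add_diff_inverse mult.commute)
  have r: "r < m" using m1 by (simp add: r_def)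
  define q where "q = mn 1 a b"
  have q: "Zv ^ a * Zbv ^ b = q" by (simp add: q_def mn_def)
  define P where "P = (\<Sum>k\<in>{1..N}. mn ((-1) ^ (m * k)) (a - m * k) (b + m * k - 1))"
  define G where "G = mn (of_nat b) a (b - 1) + cst c * (cst (of_nat m) * P)"
  have PPnz: "PP m \<noteq> 0" using PP_nz[OF m1] .
  have Gq: "dunklYb m c q = G"
  proof -
    have "PP m * dunklYb m c q = PP m * dzb q - cst c * (\<Sum>j<m. cst (zeta m ^ j) * Ej m j * (q - refl_s m j q))"
      by (rule Yb_char[OF m1]) (simp add: q_def Dj_dvd_mn)
    also have "\<dots> = PP m * G"
      unfolding q_def stepA[OF m a r] P_def[symmetric] G_def dzb_mn
      by (simp add: algebra_simps)
    finally show ?thesis using PPnz by simp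
  qed
  have Gdvd: "Dj m j dvd (G - refl_s m j G)" for j
  proof -
    have d1: "Dj m j dvd (P - refl_s m j P)" unfolding P_def by (rule dvd_sum_mn)
    have "cst (of_nat m) * P - refl_s m j (cst (of_nat m) * P) = cst (of_nat m) * (P - refl_s m j P)"
      by (simp only: refl_cst right_diff_distrib)
    hence d2: "Dj m j dvd (cst (of_nat m) * P - refl_s m j (cst (of_nat m) * P))"
      using d1 by (simp add: dvd_mult)
    show ?thesis unfolding G_def by (rule refl_dvd_add[OF Dj_dvd_mn d2])
  qed
  have SP: "(\<Sum>j<m. Ej m j * (P - refl_s m j P)) = 0"
  proof -
    have "(\<Sum>j<m. Ej m j * (P - refl_s m j P)) = (\<Sum>k\<in>{1..N}. (\<Sum>j<m. Ej m j * (mn ((-1) ^ (m * k)) (a - m * k) (b + m * k - 1) - refl_s m j (mn ((-1) ^ (m * k)) (a - m * k) (b + m * k - 1)))))"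
      unfolding P_def refl_sum sum_subtractf[symmetric] sum_distrib_left
      by (rule sum.swap)
    thus ?thesis using stepC2[OF m a r] by simp
  qed
  have SG: "(\<Sum>j<m. Ej m j * (G - refl_s m j G)) = cst (of_nat b) * cst (of_nat m) * PP m * (mn 1 (a - 1) (b - 1) + (\<Sum>k\<in>{1..N}. mn ((-1) ^ (m * k)) (a - m * k - 1) (b + m * k - 1)))"
  proof -
    have "(\<Sum>j<m. Ej m j * (G - refl_s m j G)) = (\<Sum>j<m. Ej m j * (mn (of_nat b) a (b - 1) - refl_s m j (mn (of_nat b) a (b - 1))))
       + cst c * cst (of_nat m) * (\<Sum>j<m. Ej m j * (P - refl_s m j P))"
      unfolding G_def refl_add refl_cst sum_distrib_left sum.distrib[symmetric]
      by (rule sum.cong) (simp_all add: algebra_simps)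
    thus ?thesis unfolding SP stepC1[OF m a r] by simp
  qed
  have dzG: "dz G = mn (of_nat b * of_nat a) (a - 1) (b - 1) + cst c * (cst (of_nat m) * (\<Sum>k\<in>{1..N}. mn ((-1) ^ (m * k) * of_nat (a - m * k)) (a - m * k - 1) (b + m * k - 1)))"
    unfolding G_def P_def dz_add dz_cst dz_sum dz_mn ..
  have "PP m * dunklF m c q = PP m * (- dz G + cst c * (cst (of_nat b) * cst (of_nat m) * (mn 1 (a - 1) (b - 1) + (\<Sum>k\<in>{1..N}. mn ((-1) ^ (m * k)) (a - m * k - 1) (b + m * k - 1)))))"
  proof -
    have "PP m * dunklF m c q = - (PP m * dunklY m c G)" unfolding dunklF_def Gq by simp
    also have "PP m * dunklY m c G = PP m * dz G - cst c * (\<Sum>j<m. Ej m j * (G - refl_s m j G))"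
      by (rule Y_char[OF m1 Gdvd])
    finally show ?thesis unfolding SG by (simp add: algebra_simps)
  qed
  also have "- dz G + cst c * (cst (of_nat b) * cst (of_nat m) * (mn 1 (a - 1) (b - 1) + (\<Sum>k\<in>{1..N}. mn ((-1) ^ (m * k)) (a - m * k - 1) (b + m * k - 1))))
     = cst ((of_nat m * c - of_nat a) * of_nat b) * Zv ^ (a - 1) * Zbv ^ (b - 1)
    - cst (of_nat m * c) * (\<Sum>k\<in>{1..(a - b) div m}.
        cst ((-1) ^ (m * k) * of_nat (a - b - m * k)) * Zv ^ (a - m * k - 1) * Zbv ^ (b + m * k - 1))"
  proof -
    have lhs: "- dz G + cst c * (cst (of_nat b) * cst (of_nat m) * (mn 1 (a - 1) (b - 1) + (\<Sum>k\<in>{1..N}. mn ((-1) ^ (m * k)) (a - m * k - 1) (b + m * k - 1))))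
      = mn ((of_nat m * c - of_nat a) * of_nat b) (a - 1) (b - 1)
        + (\<Sum>k\<in>{1..N}. mn (c * of_nat b * of_nat m * (-1) ^ (m * k) - c * of_nat m * ((-1) ^ (m * k) * of_nat (a - m * k))) (a - m * k - 1) (b + m * k - 1))"
      unfolding dzG lin_comb
      by (rule arg_cong2[where f="(+)"], rule mn_cong) (simp_all add: algebra_simps)
    have rhs: "cst ((of_nat m * c - of_nat a) * of_nat b) * Zv ^ (a - 1) * Zbv ^ (b - 1)
      - cst (of_nat m * c) * (\<Sum>k\<in>{1..(a - b) div m}.
        cst ((-1) ^ (m * k) * of_nat (a - b - m * k)) * Zv ^ (a - m * k - 1) * Zbv ^ (b + m * k - 1))
      = mn ((of_nat m * c - of_nat a) * of_nat b) (a - 1) (b - 1)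
        + (\<Sum>k\<in>{1..N}. mn (- (of_nat m * c * ((-1) ^ (m * k) * of_nat (a - b - m * k)))) (a - m * k - 1) (b + m * k - 1))"
      unfolding N_def[symmetric] mn_def[symmetric]
      unfolding N_def[symmetric] mn_def[symmetric] sum_distrib_left cst_mn
      by (simp only: mn_neg sum_negf diff_conv_add_uminus)
    show ?thesis unfolding lhs rhs
    proof (rule arg_cong[where f = "\<lambda>x. _ + x"], rule sum.cong[OF refl], rule mn_cong[OF _ refl refl])
      fix k assume "k \<in> {1..N}"
      hence "k \<le> N" by simp
      hence "m * k \<le> m * N" by (rule mult_le_mono2)
      moreover have "m * N \<le> a - b" using a by simp
      ultimately have "a - m * k = (a - b - m * k) + b" using \<open>a \<ge> b\<close> by linarith
      hence "of_nat (a - m * k) = (of_nat (a - b - m * k) + of_nat b :: complex)"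
        by (simp only: of_nat_add)
      thus "c * of_nat b * of_nat m * (-1) ^ (m * k) - c * of_nat m * ((-1) ^ (m * k) * of_nat (a - m * k))
        = - (of_nat m * c * ((-1) ^ (m * k) * of_nat (a - b - m * k)))"
        by (simp add: algebra_simps)
    qed
  qed
  finally show ?thesis unfolding q using PPnz by simp
qed


end
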